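(* Let $m\ge 2$, $\omega=e^{2\pi i/m}$, and $$d_n(q)=\sum_{0\le k\le n}(-1)^k q^{\binom k2}\prod_{k+1\le t\le n}[t]_q .$$ Let $c=\min\{1-\cos(2\pi j/m):1\le j\le m-1\}$. Then for every $n\ge m$ and every $1\le j\le m-1$, $$\left|d_n(\omega^j)\right|\le (m-1)\left(\frac{2}{c}\right)^{(m-2)/2}.$$ In particular $|d_n(\omega^j)|$ is bounded independently of $n$.
   Context: $[t]_q=1+q+\cdots+q^{t-1}$ for $t\ge 1$, and an empty product equals $1$. (The polynomial $d_n(q)$ is the generating function $\sum_{\pi}q^{\mathrm{maj}(\pi)}$ of the major index over derangements of $[n]$.) *)

theory Defs
  imports "HOL-Analysis.Analysis"
begin

definition qint :: "complex \<Rightarrow> nat \<Rightarrow> complex" where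
  "qint q t = (\<Sum>i<t. q ^ i)"

definition derange_poly :: "nat \<Rightarrow> complex \<Rightarrow> complex" where
  "derange_poly n q = (\<Sum>k\<in>{0..n}. (-1) ^ k * q ^ (k choose 2) * (\<Prod>t\<in>{k+1..n}. qint q t))"

end

theory Submission
  imports Defs
begin

lemma rec: "derange_poly (Suc n) q = qint q (Suc n) * derange_poly n q + (-1)^(Suc n) * q^(Suc n choose 2)"
proof -
  have "derange_poly (Suc n) q = (\<Sum>k\<in>{0..n}. (-1) ^ k * q ^ (k choose 2) * (\<Prod>t\<in>{k+1..Suc n}. qint q t)) + (-1)^(Suc n) * q^(Suc n choose 2)"
    unfolding derange_poly_def by (simp add: sum.atLeast0_atMost_Suc)
  also have "(\<Sum>k\<in>{0..n}. (-1) ^ k * q ^ (k choose 2) * (\<Prod>t\<in>{k+1..Suc n}. qint q t)) = qint q (Suc n) * derange_poly n q"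
    unfolding derange_poly_def sum_distrib_left
    by (rule sum.cong) (auto simp: prod.nat_ivl_Suc')
  finally show ?thesis .
qed

lemma qint_per: assumes "q^m = 1" "q \<noteq> 1" shows "qint q (m*a + r) = qint q r"
proof -
  have "q^(m*a+r) = q^r" using assms by (simp add: power_add power_mult)
  thus ?thesis using assms unfolding qint_def by (simp add: geometric_sum)
qed

lemma qint_bound: assumes "cmod q = 1" "q \<noteq> 1" shows "cmod (qint q t) \<le> 2 / cmod (1 - q)"
proof -
  have "qint q t = (1 - q^t) / (1 - q)" using assms unfolding qint_def
    by (simp add: geometric_sum) (simp add: divide_simps; simp add: algebra_simps)
  moreover have "cmod (1 - q^t) \<le> 2"
    using norm_triangle_ineq4[of 1 "q^t"] assms by (simp add: norm_power)
  ultimately show ?thesis using assms by (simp add: norm_divide divide_right_mono)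
qed

lemma choose2: "(Suc n choose 2) = (n choose 2) + n"
  by (simp add: numeral_2_eq_2)

lemma core:
  assumes q1: "q^m = 1" and q2: "q \<noteq> 1" and q3: "cmod q = 1" and s1: "s \<ge> 1"
    and s2: "2 / cmod (1-q) \<le> s" and a: "a > 0" and m: "m > 0"
  shows "cmod (derange_poly (m*a) q) = 1"
    and "cmod (derange_poly (m*a + Suc r) q) \<le> real r * s^(r-1)"
proof -
  have qma: "q^(m*a) = 1" using q1 by (simp add: power_mult)
  obtain b where b: "m*a = Suc b" using m a by (metis gr0_conv_Suc nat_0_less_mult_iff)
  have z: "qint q (m*a) = 0" using qint_per[OF q1 q2, of a 0] by (simp add: qint_def)
  have dN: "derange_poly (m*a) q = (-1)^(m*a) * q^(m*a choose 2)"
    using rec[of b q] z b by simp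
  show "cmod (derange_poly (m*a) q) = 1" using dN q3 by (simp add: norm_mult norm_power)
  have one: "qint q (m*a + 1) = 1" using qint_per[OF q1 q2, of a 1] by (simp add: qint_def)
  have d1: "derange_poly (m*a + 1) q = 0"
    using rec[of "m*a" q] one dN qma by (simp add: choose2 power_add)
  show "cmod (derange_poly (m*a + Suc r) q) \<le> real r * s^(r-1)"
  proof (induction r)
    case 0 then show ?case using d1 by simp
  next
    case (Suc r)
    have qb: "cmod (qint q (m*a + Suc (Suc r))) \<le> s"
      using qint_bound[OF q3 q2, of "m*a + Suc (Suc r)"] s2 by linarith
    have "derange_poly (m*a + Suc (Suc r)) q = qint q (m*a + Suc (Suc r)) * derange_poly (m*a + Suc r) q
        + (-1)^(Suc (m*a + Suc r)) * q^(Suc (m*a + Suc r) choose 2)"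
      using rec[of "m*a + Suc r" q] by simp
    hence "cmod (derange_poly (m*a + Suc (Suc r)) q) \<le> cmod (qint q (m*a + Suc (Suc r))) * cmod (derange_poly (m*a + Suc r) q) + 1"
      using norm_triangle_ineq[of "qint q (m*a + Suc (Suc r)) * derange_poly (m*a + Suc r) q" "(-1)^(Suc (m*a + Suc r)) * q^(Suc (m*a + Suc r) choose 2)"] q3
      by (simp add: norm_mult norm_power)
    also have "\<dots> \<le> s * (real r * s^(r-1)) + 1"
      using qb Suc.IH s1 by (intro add_mono mult_mono) auto
    also have "\<dots> \<le> real (Suc r) * s^(Suc r - 1)"
    proof (cases r)
      case 0 then show ?thesis by simp
    next
      case (Suc k)
      have "1 \<le> s^Suc k" using s1 by (rule one_le_power)
      then show ?thesis using Suc by (simp add: algebra_simps)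
    qed
    finally show ?case .
  qed
qed

lemma cos_lt1: assumes "0 < (x::real)" "x < 2*pi" shows "cos x < 1"
proof (rule ccontr)
  assume "\<not> cos x < 1"
  hence "cos x = 1" using cos_le_one[of x] by linarith
  then obtain n :: int where n: "x = real_of_int n * 2 * pi" using cos_one_2pi_int[of x] by blast
  have "0 < real_of_int n" using assms(1) n by (simp add: zero_less_mult_iff)
  moreover have "real_of_int n < 1" using assms(2) n by simp
  ultimately have "0 < n" "n < 1" by simp_all
  thus False by simp
qed

lemma cmod_1_cis: "cmod (1 - cis t) = sqrt (2 * (1 - cos t))"
proof -
  have "cmod (1 - cis t) = sqrt ((1 - cos t)^2 + (sin t)^2)" by (simp add: cmod_def)
  also have "(1 - cos t)^2 + (sin t)^2 = 2 * (1 - cos t)"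
    using sin_cos_squared_add[of t] by (simp add: power2_eq_square algebra_simps)
  finally show ?thesis .
qed

lemma sqrt_pow_powr: "0 < (x::real) \<Longrightarrow> sqrt x ^ k = x powr (real k / 2)"
  by (simp add: powr_half_sqrt[symmetric] powr_power)

theorem mainTheorem3:
  fixes m n j :: nat
  assumes "m \<ge> 2" and "n \<ge> m" and "1 \<le> j" and "j \<le> m - 1"
  defines "\<omega> \<equiv> cis (2 * pi / real m)"
  defines "c \<equiv> Min ((\<lambda>i. 1 - cos (2 * pi * real i / real m)) ` {1..m-1})"
  shows "cmod (derange_poly n (\<omega> ^ j)) \<le> real (m - 1) * (2 / c) powr ((real m - 2) / 2)"
proof -
  define \<theta> where "\<theta> = 2 * pi * real j / real m"
  define q where "q = \<omega> ^ j"
  have qc: "q = cis \<theta>" proof -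
    have "real j * (2*pi/real m) = \<theta>" unfolding \<theta>_def by simp
    thus ?thesis unfolding q_def \<omega>_def using Complex.DeMoivre[of "2*pi/real m" j] by (simp only:)
  qed
  have m0: "m > 0" using assms by simp
  have q1: "q^m = 1"
  proof -
    have e: "real m * \<theta> = 2*pi*real j" unfolding \<theta>_def using m0 by simp
    have c1: "cos (2*pi*real j) = 1" by (metis cos_int_2pin of_int_of_nat_eq)
    have s0: "sin (2*pi*real j) = 0" by (metis sin_int_2pin of_int_of_nat_eq)
    show ?thesis unfolding qc Complex.DeMoivre e using c1 s0 by (simp add: complex_eq_iff)
  qed
  have q3: "cmod q = 1" unfolding qc by simp
  define S where "S = (\<lambda>i. 1 - cos (2 * pi * real i / real m)) ` {1..m-1}"
  have Sfin: "finite S" "S \<noteq> {}" unfolding S_def using assms by auto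
  have Spos: "\<forall>x\<in>S. 0 < x"
  proof
    fix x assume "x \<in> S"
    then obtain i where i: "1 \<le> i" "i \<le> m-1" "x = 1 - cos (2 * pi * real i / real m)" unfolding S_def by auto
    have "cos (2 * pi * real i / real m) < 1"
      by (rule cos_lt1) (use i m0 in \<open>auto simp: divide_simps\<close>)
    thus "0 < x" using i by simp
  qed
  have cS: "c = Min S" unfolding c_def S_def ..
  have cpos: "c > 0" using Min_in[OF Sfin] Spos cS by auto
  have cle: "c \<le> 1 - cos \<theta>" unfolding cS \<theta>_def using Sfin assms unfolding S_def by (intro Min_le) auto
  have c2: "c \<le> 2" using cle cos_ge_minus_one[of \<theta>] by linarith
  define s where "s = sqrt (2 / c)"
  have s1: "s \<ge> 1" unfolding s_def using cpos c2 by (simp add: divide_simps)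
  have q2: "q \<noteq> 1" using cle cpos unfolding qc by (auto simp: cis.ctr complex_eq_iff)
  have s2: "2 / cmod (1 - q) \<le> s"
  proof -
    have "cmod (1 - q) = sqrt (2 * (1 - cos \<theta>))" unfolding qc by (rule cmod_1_cis)
    moreover have "sqrt (2 * c) \<le> sqrt (2 * (1 - cos \<theta>))" using cle by simp
    moreover have "2 / sqrt (2 * c) = s"
    proof -
      have "sqrt (2*c) * sqrt (2/c) = sqrt ((2*c) * (2/c))" by (simp only: real_sqrt_mult)
      also have "(2*c) * (2/c) = 2^2" using cpos by (simp add: power2_eq_square)
      finally have "sqrt (2*c) * s = 2" unfolding s_def by simp
      moreover have "sqrt (2*c) > 0" using cpos by simp
      ultimately show ?thesis by (simp add: field_simps)
    qed
    moreover have "0 < sqrt (2*c)" using cpos by simp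
    ultimately show ?thesis
      using divide_left_mono[of "sqrt (2*c)" "sqrt (2 * (1 - cos \<theta>))" 2] by auto
  qed
  define a where "a = n div m"
  define r where "r = n mod m"
  have n: "n = m * a + r" unfolding a_def r_def by simp
  have a0: "a > 0" unfolding a_def using assms by (simp add: div_greater_zero_iff)
  have rm: "r < m" unfolding r_def using m0 by simp
  have B: "real (m - 1) * (2 / c) powr ((real m - 2) / 2) = real (m - 1) * s ^ (m - 2)"
    unfolding s_def using cpos assms by (subst sqrt_pow_powr) auto
  have B1: "1 \<le> real (m - 1) * s ^ (m - 2)"
  proof -
    have "1 \<le> s ^ (m-2)" using s1 by (rule one_le_power)
    moreover have "1 \<le> real (m-1)" using assms by simp
    ultimately show ?thesis using mult_mono[of 1 "real(m-1)" 1 "s^(m-2)"] by simp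
  qed
  show ?thesis
  proof (cases r)
    case 0
    have "cmod (derange_poly n q) = 1" using core(1)[OF q1 q2 q3 s1 s2 a0 m0] n 0 by simp
    then show ?thesis unfolding q_def B using B1 by linarith
  next
    case (Suc r')
    have "cmod (derange_poly n q) \<le> real r' * s^(r'-1)" using core(2)[OF q1 q2 q3 s1 s2 a0 m0, of r'] n Suc by simp
    also have "\<dots> \<le> real (m - 1) * s ^ (m - 2)"
      using Suc rm s1 by (intro mult_mono power_increasing) auto
    finally show ?thesis unfolding q_def B .
  qed
qed
end
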